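(* If $G$ is a trigraph with $\operatorname{stww}(G)>\Delta(G)^2$, then $\operatorname{stww}(G)=\operatorname{tww}(G)$.
   Context: A trigraph is a finite simple graph whose edges are each colored red or black; a graph is viewed as a trigraph with all edges black. $\Delta(G)$ denotes the maximum degree of the underlying graph (edges of both colors counted). The red degree of a vertex is the number of red edges incident to it. For a partition $\mathcal{P}$ of $V(G)$, the quotient trigraph $G/\mathcal{P}$ has vertex set $\mathcal{P}$; two distinct parts $U,W$ are joined by a black edge if every pair $\{u,w\}$ with $u\in U,w\in W$ is a black edge of $G$, are non-adjacent if no such pair is an edge, and are joined by a red edge otherwise. A contraction sequence of an $n$-vertex trigraph $G$ is a sequence $\mathcal{P}_n,\dots,\mathcal{P}_1$ of partitions of $V(G)$ where $\mathcal{P}_n$ is the partition into singletons and each $\mathcal{P}_i$ arises from $\mathcal{P}_{i+1}$ by merging two parts; its width is the maximum red degree over all $G/\mathcal{P}_i$, and $\operatorname{tww}(G)$ is the minimum width of a contraction sequence. The sparse twin-width is $\operatorname{stww}(G)\coloneqq\operatorname{tww}(G_{\mathrm{red}})$, where $G_{\mathrm{red}}$ is obtained from $G$ by coloring all edges red. *)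

theory Defs
  imports Main
begin

text \<open>A trigraph is given by a finite vertex set V, a set E of edges (2-element
subsets of V, of either colour) and the set R \<subseteq> E of red edges; the black
edges are E - R. A graph is a trigraph with R = {}.\<close>

definition trigraph :: "'a set \<Rightarrow> 'a set set \<Rightarrow> 'a set set \<Rightarrow> bool" where
  "trigraph V E R \<longleftrightarrow> finite V \<and>
     (\<forall>e\<in>E. \<exists>u v. u \<in> V \<and> v \<in> V \<and> u \<noteq> v \<and> e = {u, v}) \<and> R \<subseteq> E"

definition maxdeg :: "'a set \<Rightarrow> 'a set set \<Rightarrow> nat" where
  "maxdeg V E = Max (insert 0 ((\<lambda>v. card {e \<in> E. v \<in> e}) ` V))"

definition qblack :: "'a set set \<Rightarrow> 'a set set \<Rightarrow> 'a set \<Rightarrow> 'a set \<Rightarrow> bool" where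
  "qblack E R U W \<longleftrightarrow> (\<forall>u\<in>U. \<forall>w\<in>W. {u, w} \<in> E - R)"

definition qnonadj :: "'a set set \<Rightarrow> 'a set \<Rightarrow> 'a set \<Rightarrow> bool" where
  "qnonadj E U W \<longleftrightarrow> (\<forall>u\<in>U. \<forall>w\<in>W. {u, w} \<notin> E)"

definition qred :: "'a set set \<Rightarrow> 'a set set \<Rightarrow> 'a set \<Rightarrow> 'a set \<Rightarrow> bool" where
  "qred E R U W \<longleftrightarrow> \<not> qblack E R U W \<and> \<not> qnonadj E U W"

definition red_degree :: "'a set set \<Rightarrow> 'a set set \<Rightarrow> 'a set set \<Rightarrow> 'a set \<Rightarrow> nat" where
  "red_degree E R P U = card {W \<in> P. W \<noteq> U \<and> qred E R U W}"

text \<open>A contraction sequence P_n, ..., P_1 (n = |V|) is represented by a function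
s :: nat => partition, with s n the singleton partition and s i obtained from
s (i+1) by merging two distinct parts, for 1 \<le> i < n.\<close>
definition contraction_seq :: "'a set \<Rightarrow> (nat \<Rightarrow> 'a set set) \<Rightarrow> bool" where
  "contraction_seq V s \<longleftrightarrow>
     s (card V) = (\<lambda>v. {v}) ` V \<and>
     (\<forall>i. 1 \<le> i \<and> i < card V \<longrightarrow>
        (\<exists>X\<in>s (Suc i). \<exists>Y\<in>s (Suc i). X \<noteq> Y \<and>
            s i = insert (X \<union> Y) (s (Suc i) - {X, Y})))"

definition width_le :: "'a set \<Rightarrow> 'a set set \<Rightarrow> 'a set set \<Rightarrow> (nat \<Rightarrow> 'a set set) \<Rightarrow> nat \<Rightarrow> bool" where
  "width_le V E R s d \<longleftrightarrow>
     (\<forall>i\<in>{1..card V}. \<forall>U\<in>s i. red_degree E R (s i) U \<le> d)"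

definition tww :: "'a set \<Rightarrow> 'a set set \<Rightarrow> 'a set set \<Rightarrow> nat" where
  "tww V E R = (LEAST d. \<exists>s. contraction_seq V s \<and> width_le V E R s d)"

definition stww :: "'a set \<Rightarrow> 'a set set \<Rightarrow> nat" where
  "stww V E = tww V E E"

end

theory Submission
  imports Defs
begin

definition goodpart :: "'a set \<Rightarrow> 'a set set \<Rightarrow> bool" where
  "goodpart V P \<longleftrightarrow> (\<forall>U\<in>P. U \<noteq> {} \<and> U \<subseteq> V) \<and> (\<forall>U\<in>P. \<forall>W\<in>P. U \<noteq> W \<longrightarrow> U \<inter> W = {})"

lemma seq_good_aux:
  assumes cs: "contraction_seq V s"
  shows "k < card V \<Longrightarrow> goodpart V (s (card V - k))"
proof (induction k)
  case 0
  have "s (card V) = (\<lambda>v. {v}) ` V" using conjunct1[OF cs[unfolded contraction_seq_def]] .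
  moreover have "goodpart V ((\<lambda>v. {v}) ` V)" unfolding goodpart_def by blast
  ultimately show ?case by simp
next
  case (Suc k)
  hence IH: "goodpart V (s (card V - k))" by simp
  define i where "i = card V - Suc k"
  have i1: "1 \<le> i" "i < card V" using Suc.prems i_def by auto
  have si: "Suc i = card V - k" using Suc.prems i_def by auto
  obtain X Y where XY: "X \<in> s (Suc i)" "Y \<in> s (Suc i)" "X \<noteq> Y"
     "s i = insert (X \<union> Y) (s (Suc i) - {X, Y})"
    using conjunct2[OF cs[unfolded contraction_seq_def], rule_format, OF conjI[OF i1]] by blast
  have G: "goodpart V (s (Suc i))" using IH si by simp
  have G1: "\<forall>U\<in>s (Suc i). U \<noteq> {} \<and> U \<subseteq> V" and
       G2: "\<forall>U\<in>s (Suc i). \<forall>W\<in>s (Suc i). U \<noteq> W \<longrightarrow> U \<inter> W = {}"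
    using G unfolding goodpart_def by auto
  have A1: "\<forall>U\<in>insert (X \<union> Y) (s (Suc i) - {X, Y}). U \<noteq> {} \<and> U \<subseteq> V"
    using G1 XY(1,2) by auto
  have A2: "\<forall>U\<in>insert (X \<union> Y) (s (Suc i) - {X, Y}). \<forall>W\<in>insert (X \<union> Y) (s (Suc i) - {X, Y}). U \<noteq> W \<longrightarrow> U \<inter> W = {}"
  proof (intro ballI impI)
    fix U W assume U: "U \<in> insert (X \<union> Y) (s (Suc i) - {X, Y})"
      and W: "W \<in> insert (X \<union> Y) (s (Suc i) - {X, Y})" and UW: "U \<noteq> W"
    have dX: "Z \<inter> X = {}" "Z \<inter> Y = {}" if "Z \<in> s (Suc i) - {X, Y}" for Z
      using G2 XY(1,2) that by blast+
    show "U \<inter> W = {}"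
    proof (cases "U = X \<union> Y")
      case True
      then have "W \<in> s (Suc i) - {X, Y}" using W UW by auto
      then show ?thesis using dX True by blast
    next
      case False
      then have U': "U \<in> s (Suc i) - {X, Y}" using U by auto
      show ?thesis
      proof (cases "W = X \<union> Y")
        case True
        then show ?thesis using dX[OF U'] by blast
      next
        case False
        then have "W \<in> s (Suc i) - {X, Y}" using W by auto
        then show ?thesis using U' G2 UW by blast
      qed
    qed
  qed
  have "goodpart V (insert (X \<union> Y) (s (Suc i) - {X, Y}))"
    using A1 A2 unfolding goodpart_def by blast
  then show ?case using XY(4) i_def by simp
qed

lemma seq_good:
  assumes "contraction_seq V s" "i \<in> {1..card V}"
  shows "goodpart V (s i)"
proof -
  have "card V - (card V - i) = i" using assms(2) by auto
  moreover have "card V - i < card V" using assms(2) by auto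
  ultimately show ?thesis using seq_good_aux[OF assms(1), of "card V - i"] by simp
qed

lemma deg_le:
  assumes "trigraph V E R" "v \<in> V"
  shows "card {e \<in> E. v \<in> e} \<le> maxdeg V E"
proof -
  have "finite V" using assms(1) unfolding trigraph_def by auto
  then show ?thesis unfolding maxdeg_def using assms(2)
    by (intro Max_ge) auto
qed

lemma finE:
  assumes "trigraph V E R"
  shows "finite E"
proof -
  have "E \<subseteq> Pow V" using assms unfolding trigraph_def by auto
  moreover have "finite V" using assms unfolding trigraph_def by auto
  ultimately show ?thesis using finite_subset by blast
qed

lemma finP:
  assumes "trigraph V E R" "goodpart V P"
  shows "finite P" "card P \<le> card (Pow V)"
proof -
  have "P \<subseteq> Pow V" using assms(2) unfolding goodpart_def by auto
  moreover have "finite V" using assms unfolding trigraph_def by auto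
  ultimately show "finite P" "card P \<le> card (Pow V)" using finite_subset card_mono[of "Pow V" P] by auto
qed

lemma rd_bound:
  assumes "trigraph V E R" "goodpart V P"
  shows "red_degree E R' P U \<le> card (Pow V)"
proof -
  have "red_degree E R' P U \<le> card P" unfolding red_degree_def
    using finP[OF assms] by (intro card_mono) auto
  then show ?thesis using finP[OF assms] by linarith
qed

lemma rd_mono:
  assumes "trigraph V E R" "goodpart V P" "U \<in> P"
  shows "red_degree E R P U \<le> red_degree E E P U"
proof -
  have "{W \<in> P. W \<noteq> U \<and> qred E R U W} \<subseteq> {W \<in> P. W \<noteq> U \<and> qred E E U W}"
  proof
    fix W assume W: "W \<in> {W \<in> P. W \<noteq> U \<and> qred E R U W}"
    then have "\<not> qnonadj E U W" unfolding qred_def by auto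
    moreover have "U \<noteq> {}" "W \<noteq> {}" using W assms(2,3) unfolding goodpart_def by auto
    ultimately show "W \<in> {W \<in> P. W \<noteq> U \<and> qred E E U W}"
      using W unfolding qred_def qblack_def by auto
  qed
  then show ?thesis unfolding red_degree_def using finP[OF assms(1,2)]
    by (intro card_mono) auto
qed

lemma rd_key:
  assumes tg: "trigraph V E R" and gp: "goodpart V P" and UP: "U \<in> P"
  shows "red_degree E E P U \<le> max (red_degree E R P U) ((maxdeg V E)^2)"
proof (cases "\<exists>W\<in>P. W \<noteq> U \<and> qblack E R U W")
  case False
  have "{W \<in> P. W \<noteq> U \<and> qred E E U W} \<subseteq> {W \<in> P. W \<noteq> U \<and> qred E R U W}"
    using False unfolding qred_def qblack_def qnonadj_def by auto
  then have "red_degree E E P U \<le> red_degree E R P U" unfolding red_degree_def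
    using finP[OF tg gp] by (intro card_mono) auto
  then show ?thesis by simp
next
  case True
  define D where "D = maxdeg V E"
  have finV: "finite V" using tg unfolding trigraph_def by auto
  have UV: "U \<subseteq> V" "U \<noteq> {}" using gp UP unfolding goodpart_def by auto
  have finU: "finite U" using UV finV finite_subset by blast
  have finE: "finite E" using finE[OF tg] .
  obtain W where W: "W \<in> P" "W \<noteq> U" "qblack E R U W" using True by auto
  have WV: "W \<subseteq> V" "W \<noteq> {}" "U \<inter> W = {}" using gp UP W unfolding goodpart_def by auto
  obtain w where w: "w \<in> W" using WV by auto
  have cU: "card U \<le> D"
  proof -
    have "card U \<le> card {e \<in> E. w \<in> e}"
    proof (rule card_inj_on_le[where f = "\<lambda>u. {u, w}"])
      show "inj_on (\<lambda>u. {u, w}) U" using WV(3) w unfolding inj_on_def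
        by (auto simp: doubleton_eq_iff)
      show "(\<lambda>u. {u, w}) ` U \<subseteq> {e \<in> E. w \<in> e}" using W(3) w unfolding qblack_def by auto
      show "finite {e \<in> E. w \<in> e}" using finE by auto
    qed
    also have "\<dots> \<le> D" unfolding D_def using deg_le[OF tg] w WV by auto
    finally show ?thesis .
  qed
  define S where "S = Sigma U (\<lambda>u. {e \<in> E. u \<in> e})"
  have cS: "card S = (\<Sum>u\<in>U. card {e \<in> E. u \<in> e})" unfolding S_def
    using finU finE by (intro card_SigmaI) auto
  also have "\<dots> \<le> card U * D"
    using deg_le[OF tg] UV sum_bounded_above[of U "\<lambda>u. card {e \<in> E. u \<in> e}" D] unfolding D_def by auto
  finally have cS2: "card S \<le> card U * D" .
  define g where "g = (\<lambda>(u::'a, e::'a set). SOME X. X \<in> P \<and> (\<exists>x\<in>e. x \<noteq> u \<and> x \<in> X))"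
  have sub: "{W \<in> P. W \<noteq> U \<and> qred E E U W} \<subseteq> g ` S"
  proof
    fix X assume X: "X \<in> {W \<in> P. W \<noteq> U \<and> qred E E U W}"
    then have "\<not> qnonadj E U X" unfolding qred_def by auto
    then obtain u x where ux: "u \<in> U" "x \<in> X" "{u, x} \<in> E" unfolding qnonadj_def by auto
    have dUX: "U \<inter> X = {}" using gp UP X unfolding goodpart_def by auto
    have uxne: "u \<noteq> x" using dUX ux by auto
    have gval: "g (u, {u, x}) = X"
    proof -
      have ex: "\<exists>Y. Y \<in> P \<and> (\<exists>y\<in>{u, x}. y \<noteq> u \<and> y \<in> Y)" using X ux uxne by auto
      let ?Y = "SOME Y. Y \<in> P \<and> (\<exists>y\<in>{u, x}. y \<noteq> u \<and> y \<in> Y)"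
      have "?Y \<in> P \<and> (\<exists>y\<in>{u, x}. y \<noteq> u \<and> y \<in> ?Y)" using someI_ex[OF ex] .
      then have "?Y \<in> P" "x \<in> ?Y" by auto
      then have "?Y = X" using gp X ux(2) unfolding goodpart_def by blast
      then show ?thesis unfolding g_def by simp
    qed
    have "(u, {u, x}) \<in> S" unfolding S_def using ux by auto
    then show "X \<in> g ` S" using gval by force
  qed
  have "red_degree E E P U \<le> card (g ` S)" unfolding red_degree_def
    using sub S_def finU finE by (intro card_mono) auto
  also have "\<dots> \<le> card S" by (rule card_image_le) (use finU finE in \<open>auto simp: S_def\<close>)
  also have "\<dots> \<le> D * D" using cS2 cU mult_le_mono1 order_trans by blast
  finally show ?thesis unfolding D_def by (simp add: power2_eq_square)
qed

theorem mainTheorem10: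
  fixes V :: "'a set" and E R :: "'a set set"
  assumes "trigraph V E R"
    and "stww V E > (maxdeg V E)^2"
  shows "stww V E = tww V E R"
proof (cases "\<exists>s. contraction_seq V s")
  case False
  then show ?thesis unfolding stww_def tww_def by simp
next
  case True
  then obtain s0 where s0: "contraction_seq V s0" by auto
  have wE: "width_le V E E s0 (card (Pow V))" "width_le V E R s0 (card (Pow V))"
    unfolding width_le_def using rd_bound[OF assms(1) seq_good[OF s0]] by auto
  obtain sR where sR: "contraction_seq V sR" "width_le V E R sR (tww V E R)"
    using LeastI_ex[of "\<lambda>d. \<exists>s. contraction_seq V s \<and> width_le V E R s d"] wE(2) s0
    unfolding tww_def by blast
  have "width_le V E E sR (max (tww V E R) ((maxdeg V E)^2))"
    unfolding width_le_def
  proof (intro ballI)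
    fix i U assume i: "i \<in> {1..card V}" and U: "U \<in> sR i"
    have "red_degree E R (sR i) U \<le> tww V E R" using sR(2) i U unfolding width_le_def by auto
    then show "red_degree E E (sR i) U \<le> max (tww V E R) ((maxdeg V E)^2)"
      using rd_key[OF assms(1) seq_good[OF sR(1) i] U] by linarith
  qed
  then have le1: "stww V E \<le> max (tww V E R) ((maxdeg V E)^2)"
    unfolding stww_def tww_def using sR(1) by (intro Least_le) blast
  obtain sE where sE: "contraction_seq V sE" "width_le V E E sE (stww V E)"
    using LeastI_ex[of "\<lambda>d. \<exists>s. contraction_seq V s \<and> width_le V E E s d"] wE(1) s0
    unfolding tww_def stww_def by blast
  have "width_le V E R sE (stww V E)"
    unfolding width_le_def
  proof (intro ballI)
    fix i U assume i: "i \<in> {1..card V}" and U: "U \<in> sE i"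
    have "red_degree E E (sE i) U \<le> stww V E" using sE(2) i U unfolding width_le_def by auto
    then show "red_degree E R (sE i) U \<le> stww V E"
      using rd_mono[OF assms(1) seq_good[OF sE(1) i] U] by linarith
  qed
  then have le2: "tww V E R \<le> stww V E"
    unfolding tww_def using sE(1) by (intro Least_le) blast
  show ?thesis using le1 le2 assms(2) by linarith
qed

end
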